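(* Let $U$ be a finite ground set partitioned as $\mathcal{P}=\{U_1,\dots,U_N\}$, let $\kappa\in\mathbb{N}$, $\vec l,\vec u\in\mathbb{N}^N$, let $\beta\in\mathbb{N}_+$, and let $\mathcal{M}_\beta$ be the $\beta$-extension of $\mathcal{M}_{fair}(\mathcal{P},\kappa,\vec l,\vec u)$. Then for any $S\in\mathcal{M}_\beta$ with $|S|=\beta\kappa$, any $T\in\mathcal{M}_{fair}(\mathcal{P},\kappa,\vec l,\vec u)$ with $|T|=\kappa$, and any ordering $S=(s_1,\dots,s_{\beta\kappa})$ of $S$, there exists a sequence $E=(e_1,\dots,e_{\beta\kappa})$ in which each element of $T$ appears exactly $\beta$ times, such that $S_i\cup\{e_{i+1}\}\in\mathcal{M}_\beta$ for all $i\in\{0,1,\dots,\beta\kappa-1\}$, where $S_i=\{s_1,\dots,s_i\}$ and $S_0=\emptyset$.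
   Context: Fairness matroid: $\mathcal{M}_{fair}(\mathcal{P},\kappa,\vec l,\vec u)=\{S\subseteq U: |S\cap U_c|\le u_c\ \forall c\in[N],\ \sum_{c\in[N]}\max\{|S\cap U_c|,l_c\}\le\kappa\}$. Its $\beta$-extension is $\mathcal{M}_\beta=\mathcal{M}_{fair}(\mathcal{P},\beta\kappa,\beta\vec l,\beta\vec u)=\{S\subseteq U: |S\cap U_c|\le\beta u_c\ \forall c,\ \sum_c\max\{|S\cap U_c|,\beta l_c\}\le\beta\kappa\}$. *)

theory Defs
  imports Main "HOL-Library.Multiset"
begin

definition is_partition :: "'a set \<Rightarrow> nat \<Rightarrow> (nat \<Rightarrow> 'a set) \<Rightarrow> bool" where
  "is_partition U N P \<longleftrightarrow>
     (\<forall>c<N. P c \<noteq> {}) \<and>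
     (\<forall>c<N. \<forall>d<N. c \<noteq> d \<longrightarrow> P c \<inter> P d = {}) \<and>
     (\<Union>c<N. P c) = U"

definition fair_matroid ::
  "'a set \<Rightarrow> nat \<Rightarrow> (nat \<Rightarrow> 'a set) \<Rightarrow> nat \<Rightarrow> (nat \<Rightarrow> nat) \<Rightarrow> (nat \<Rightarrow> nat) \<Rightarrow> 'a set set" where
  "fair_matroid U N P \<kappa> l u =
     {S. S \<subseteq> U \<and> (\<forall>c<N. card (S \<inter> P c) \<le> u c) \<and>
         (\<Sum>c<N. max (card (S \<inter> P c)) (l c)) \<le> \<kappa>}"

definition beta_extension ::
  "'a set \<Rightarrow> nat \<Rightarrow> (nat \<Rightarrow> 'a set) \<Rightarrow> nat \<Rightarrow> (nat \<Rightarrow> nat) \<Rightarrow> (nat \<Rightarrow> nat) \<Rightarrow> nat \<Rightarrow> 'a set set" where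
  "beta_extension U N P \<kappa> l u \<beta> =
     fair_matroid U N P (\<beta> * \<kappa>) (\<lambda>c. \<beta> * l c) (\<lambda>c. \<beta> * u c)"

end

theory Submission
  imports Defs
begin

lemma fm_down:
  assumes "X \<in> fair_matroid U N P k l u" "Y \<subseteq> X" "finite U"
  shows "Y \<in> fair_matroid U N P k l u"
proof -
  have XU: "X \<subseteq> U" using assms(1) unfolding fair_matroid_def by auto
  have fin: "finite (X \<inter> P c)" for c using XU assms(3) by (meson finite_subset inf_le1)
  have le: "card (Y \<inter> P c) \<le> card (X \<inter> P c)" for c
    using fin[of c] assms(2) by (intro card_mono) auto
  have "(\<Sum>c<N. max (card (Y \<inter> P c)) (l c)) \<le> (\<Sum>c<N. max (card (X \<inter> P c)) (l c))"
    using le by (intro sum_mono max.mono) auto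
  then show ?thesis using assms(1,2) le unfolding fair_matroid_def
    by (auto intro: order_trans) (meson le_trans)
qed

lemma part_cover: "is_partition U N P \<Longrightarrow> x \<in> U \<Longrightarrow> \<exists>c<N. x \<in> P c"
  unfolding is_partition_def by auto

lemma part_disj: "is_partition U N P \<Longrightarrow> c < N \<Longrightarrow> d < N \<Longrightarrow> x \<in> P c \<Longrightarrow> x \<in> P d \<Longrightarrow> c = d"
  unfolding is_partition_def by blast

lemma part_sum:
  assumes "is_partition U N P" "finite U" "A \<subseteq> U"
  shows "(\<Sum>c<N. card (A \<inter> P c)) = card A"
proof -
  have "A = (\<Union>c<N. A \<inter> P c)" using assms part_cover[OF assms(1)] by blast
  moreover have "card (\<Union>c<N. A \<inter> P c) = (\<Sum>c<N. card (A \<inter> P c))"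
    apply (rule card_UN_disjoint)
    using assms finite_subset apply auto[2]
    using part_disj[OF assms(1)] by blast
  ultimately show ?thesis by simp
qed

lemma core:
  assumes fU: "finite U" and part: "is_partition U N P"
    and A: "A \<in> beta_extension U N P \<kappa> l u \<beta>"
    and T: "T \<in> fair_matroid U N P \<kappa> l u" and cT: "card T = \<kappa>"
  shows "\<beta> * card {x\<in>T. A \<union> {x} \<notin> beta_extension U N P \<kappa> l u \<beta>} \<le> card A"
proof -
  define a where "a c = card (A \<inter> P c)" for c
  define t where "t c = card (T \<inter> P c)" for c
  define S0 where "S0 = (\<Sum>d<N. max (a d) (\<beta> * l d))"
  have AU: "A \<subseteq> U" and Au: "\<forall>c<N. a c \<le> \<beta> * u c" and AS: "S0 \<le> \<beta> * \<kappa>"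
    using A unfolding beta_extension_def fair_matroid_def a_def S0_def by auto
  have TU: "T \<subseteq> U" and tu: "\<forall>c<N. t c \<le> u c" and TS: "(\<Sum>c<N. max (t c) (l c)) \<le> \<kappa>"
    using T unfolding fair_matroid_def t_def by auto
  have finA: "finite A" using AU fU finite_subset by blast
  have sumt: "(\<Sum>c<N. t c) = \<kappa>" using part_sum[OF part fU TU] cT unfolding t_def by simp
  have suma: "(\<Sum>c<N. a c) = card A" using part_sum[OF part fU AU] unfolding a_def by simp
  have lt: "\<forall>c<N. l c \<le> t c"
  proof (rule ccontr)
    assume "\<not> (\<forall>c<N. l c \<le> t c)"
    then obtain c where c: "c < N" "t c < l c" by auto
    have "(\<Sum>c<N. t c) < (\<Sum>c<N. max (t c) (l c))"
      apply (rule sum_strict_mono_ex1) using c by (auto intro!: bexI[where x=c])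
    then show False using sumt TS by simp
  qed
  define bad where "bad c \<longleftrightarrow> \<beta> * u c \<le> a c \<or> (\<beta> * l c \<le> a c \<and> \<beta> * \<kappa> \<le> S0)" for c
  define C where "C = {c. c < N \<and> bad c}"
  define B where "B = {x\<in>T. A \<union> {x} \<notin> beta_extension U N P \<kappa> l u \<beta>}"
  have Bsub: "B \<subseteq> (\<Union>c\<in>C. T \<inter> P c)"
  proof
    fix x assume "x \<in> B"
    then have xT: "x \<in> T" and xn: "A \<union> {x} \<notin> beta_extension U N P \<kappa> l u \<beta>"
      unfolding B_def by auto
    obtain c where c: "c < N" "x \<in> P c" using part_cover[OF part] xT TU by blast
    have "bad c"
    proof (rule ccontr)
      assume nb: "\<not> bad c"
      have xA: "x \<notin> A" using xn A by (metis insert_absorb insert_is_Un sup_commute)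
      have cd: "card ((A \<union> {x}) \<inter> P d) = (if d = c then a c + 1 else a d)" if "d < N" for d
      proof (cases "d = c")
        case True
        have "(A \<union> {x}) \<inter> P c = insert x (A \<inter> P c)" using c by auto
        then show ?thesis using True xA finA unfolding a_def by simp
      next
        case False
        have "x \<notin> P d" using part_disj[OF part c(1) that c(2)] False by auto
        then have "(A \<union> {x}) \<inter> P d = A \<inter> P d" by auto
        then show ?thesis using False unfolding a_def by simp
      qed
      have sumle: "(\<Sum>d<N. max (card ((A \<union> {x}) \<inter> P d)) (\<beta> * l d)) \<le> \<beta> * \<kappa>"
      proof (cases "a c < \<beta> * l c")
        case True
        have "(\<Sum>d<N. max (card ((A \<union> {x}) \<inter> P d)) (\<beta> * l d)) = S0"
          unfolding S0_def apply (rule sum.cong) using cd True by auto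
        then show ?thesis using AS by simp
      next
        case False
        then have lt: "S0 < \<beta> * \<kappa>" using nb unfolding bad_def by auto
        have "(\<Sum>d<N. max (card ((A \<union> {x}) \<inter> P d)) (\<beta> * l d))
              \<le> (\<Sum>d<N. max (a d) (\<beta> * l d) + (if d = c then 1 else 0))"
          apply (rule sum_mono) using cd by auto
        also have "\<dots> = S0 + 1" unfolding S0_def sum.distrib using c by simp
        finally show ?thesis using lt by simp
      qed
      have "A \<union> {x} \<in> beta_extension U N P \<kappa> l u \<beta>"
        unfolding beta_extension_def fair_matroid_def
        using AU xT TU sumle cd nb Au unfolding bad_def by auto
      then show False using xn by simp
    qed
    then show "x \<in> (\<Union>c\<in>C. T \<inter> P c)" using c xT unfolding C_def by auto
  qed
  have finC: "finite C" unfolding C_def by auto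
  have CN: "C \<subseteq> {..<N}" unfolding C_def by auto
  have "card B \<le> card (\<Union>c\<in>C. T \<inter> P c)"
    apply (rule card_mono) using finC TU fU finite_subset Bsub by (auto intro!: finite_UN_I)
  also have "\<dots> \<le> (\<Sum>c\<in>C. t c)" unfolding t_def using finC by (rule card_UN_le)
  finally have cB: "\<beta> * card B \<le> (\<Sum>c\<in>C. \<beta> * t c)" by (simp add: sum_distrib_left[symmetric])
  have key: "(\<Sum>c\<in>C. \<beta> * t c) \<le> (\<Sum>c\<in>C. a c)"
  proof (cases "\<beta> * \<kappa> \<le> S0")
    case True
    have Ceq: "C = {c. c < N \<and> \<beta> * l c \<le> a c}"
      unfolding C_def bad_def using True lt tu
      by (auto intro: order_trans[rotated] simp del: mult_le_cancel1)
        (meson le_trans mult_le_mono2)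
    have S0s: "S0 = (\<Sum>c\<in>{..<N} - C. \<beta> * l c) + (\<Sum>c\<in>C. a c)"
    proof -
      have "S0 = (\<Sum>c\<in>{..<N} - C. max (a c) (\<beta> * l c)) + (\<Sum>c\<in>C. max (a c) (\<beta> * l c))"
        unfolding S0_def by (rule sum.subset_diff[OF CN]) simp
      moreover have "(\<Sum>c\<in>{..<N} - C. max (a c) (\<beta> * l c)) = (\<Sum>c\<in>{..<N} - C. \<beta> * l c)"
        by (rule sum.cong) (auto simp: Ceq)
      moreover have "(\<Sum>c\<in>C. max (a c) (\<beta> * l c)) = (\<Sum>c\<in>C. a c)"
        by (rule sum.cong) (auto simp: Ceq)
      ultimately show ?thesis by simp
    qed
    have "\<beta> * \<kappa> = (\<Sum>c<N. \<beta> * t c)" using sumt by (simp add: sum_distrib_left[symmetric])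
    also have "\<dots> = (\<Sum>c\<in>{..<N} - C. \<beta> * t c) + (\<Sum>c\<in>C. \<beta> * t c)"
      by (rule sum.subset_diff[OF CN]) simp
    finally have e1: "\<beta> * \<kappa> = (\<Sum>c\<in>{..<N} - C. \<beta> * t c) + (\<Sum>c\<in>C. \<beta> * t c)" .
    have "(\<Sum>c\<in>{..<N} - C. \<beta> * l c) \<le> (\<Sum>c\<in>{..<N} - C. \<beta> * t c)"
      by (rule sum_mono) (use lt in auto)
    then show ?thesis using e1 S0s True by linarith
  next
    case False
    show ?thesis
    proof (rule sum_mono)
      fix c assume "c \<in> C"
      then have "c < N" "\<beta> * u c \<le> a c" using False unfolding C_def bad_def by auto
      then show "\<beta> * t c \<le> a c" using tu by (meson le_trans mult_le_mono2)
    qed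
  qed
  have "(\<Sum>c\<in>C. a c) \<le> (\<Sum>c<N. a c)" by (rule sum_mono2) (use CN in auto)
  then show ?thesis using cB key suma unfolding B_def by linarith
qed

theorem lemma2:
  fixes U :: "'a set" and N :: nat and P :: "nat \<Rightarrow> 'a set"
    and \<kappa> \<beta> :: nat and l u :: "nat \<Rightarrow> nat"
    and S T :: "'a set" and s :: "'a list"
  assumes "finite U"
    and "is_partition U N P"
    and "\<beta> \<ge> 1"
    and "S \<in> beta_extension U N P \<kappa> l u \<beta>" and "card S = \<beta> * \<kappa>"
    and "T \<in> fair_matroid U N P \<kappa> l u" and "card T = \<kappa>"
    and "distinct s" and "set s = S"
  shows "\<exists>e :: 'a list. length e = \<beta> * \<kappa> \<and>
           (\<forall>x. count (mset e) x = (if x \<in> T then \<beta> else 0)) \<and>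
           (\<forall>i < \<beta> * \<kappa>. set (take i s) \<union> {e ! i} \<in> beta_extension U N P \<kappa> l u \<beta>)"
proof -
  note fU = assms(1) and part = assms(2) and SM = assms(4) and cS = assms(5)
    and TM = assms(6) and cT = assms(7) and ds = assms(8) and ss = assms(9)
  define Mb where "Mb = beta_extension U N P \<kappa> l u \<beta>"
  define n where "n = \<beta> * \<kappa>"
  have down: "X \<in> Mb \<Longrightarrow> Y \<subseteq> X \<Longrightarrow> Y \<in> Mb" for X Y
    unfolding Mb_def beta_extension_def using fm_down fU by blast
  have len: "length s = n" using distinct_card[OF ds] ss cS n_def by simp
  have pre: "set (take k s) \<in> Mb" for k
    using down[of S "set (take k s)"] SM ss Mb_def by (meson set_take_subset)
  have cpre: "k \<le> n \<Longrightarrow> card (set (take k s)) = k" for k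
    using distinct_card[OF distinct_take[OF ds]] len by simp
  define F where "F x j \<longleftrightarrow> set (take j s) \<union> {x} \<in> Mb" for x j
  have Fmono: "F x j \<Longrightarrow> i \<le> j \<Longrightarrow> F x i" for x i j
    unfolding F_def using down set_take_subset_set_take
    by (metis Un_mono subset_refl)
  define D where "D x = (LEAST j. j = n \<or> \<not> F x j)" for x
  have D_F: "j < D x \<Longrightarrow> F x j" for x j
    unfolding D_def using not_less_Least by blast
  have D_nF: "D x < n \<Longrightarrow> \<not> F x (D x)" for x
  proof -
    assume "D x < n"
    moreover have "D x = n \<or> \<not> F x (D x)" unfolding D_def by (rule LeastI[of _ n]) simp
    ultimately show ?thesis by simp
  qed
  have coreb: "k < n \<Longrightarrow> \<beta> * card {x\<in>T. \<not> F x k} \<le> k" for k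
    using core[OF fU part pre[of k, unfolded Mb_def] TM cT] cpre[of k]
    unfolding F_def Mb_def by simp
  have finT: "finite T" using TM fU unfolding fair_matroid_def by (auto intro: finite_subset)
  define M where "M = repeat_mset \<beta> (mset_set T)"
  obtain xs where xs: "mset xs = M" using ex_mset by blast
  define e where "e = sort_key D xs"
  have me: "mset e = M" unfolding e_def using xs by simp
  have le: "length e = n" using arg_cong[OF me, of size] finT cT n_def
    by (simp add: M_def)
  have srt: "sorted (map D e)" unfolding e_def by (rule sorted_sort_key)
  have fM: "filter_mset p M = repeat_mset \<beta> (mset_set {x\<in>T. p x})" for p
    proof -
    have "filter_mset p M = repeat_mset \<beta> (filter_mset p (mset_set T))"
      by (rule multiset_eqI) (simp add: M_def)
    then show ?thesis using filter_mset_mset_set[OF finT] by simp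
  qed
  have good: "i < D (e ! i)" if i: "i < n" for i
  proof (rule ccontr)
    assume "\<not> i < D (e ! i)"
    define k where "k = D (e ! i)"
    have ki: "k \<le> i" using \<open>\<not> i < D (e ! i)\<close> k_def by simp
    have sub: "{..i} \<subseteq> {j. j < length e \<and> D (e ! j) \<le> k}"
    proof
      fix j assume "j \<in> {..i}"
      then have "j \<le> i" by simp
      then have "(map D e) ! j \<le> (map D e) ! i"
        using sorted_nth_mono[OF srt, of j i] le i by simp
      then show "j \<in> {j. j < length e \<and> D (e ! j) \<le> k}"
        using \<open>j \<le> i\<close> le i k_def by simp
    qed
    have "Suc i = card {..i}" by simp
    also have "\<dots> \<le> card {j. j < length e \<and> D (e ! j) \<le> k}"
      by (rule card_mono[OF _ sub]) simp
    also have "\<dots> = length (filter (\<lambda>x. D x \<le> k) e)" by (simp add: length_filter_conv_card)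
    also have "\<dots> = size (filter_mset (\<lambda>x. D x \<le> k) M)"
      by (metis me mset_filter size_mset)
    also have "\<dots> = \<beta> * card {x\<in>T. D x \<le> k}" using fM by simp
    also have "\<dots> \<le> \<beta> * card {x\<in>T. \<not> F x k}"
    proof -
      have "{x\<in>T. D x \<le> k} \<subseteq> {x\<in>T. \<not> F x k}"
      proof (intro subsetI CollectI conjI)
        fix x assume "x \<in> {x\<in>T. D x \<le> k}"
        then have xT: "x \<in> T" and dk: "D x \<le> k" by auto
        then show "x \<in> T" by simp
        have dn: "D x < n" using dk ki i by simp
        show "\<not> F x k"
        proof
          assume "F x k"
          then have "F x (D x)" using Fmono dk by blast
          then show False using D_nF[OF dn] by simp
        qed
      qed
      then show ?thesis using finT by (simp add: card_mono)
    qed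
    also have "\<dots> \<le> k" using coreb ki i by simp
    finally show False using ki by simp
  qed
  show ?thesis
  proof (intro exI conjI allI impI)
    show "length e = \<beta> * \<kappa>" using le n_def by simp
    show "count (mset e) x = (if x \<in> T then \<beta> else 0)" for x
      using me finT by (simp add: M_def)
    show "set (take i s) \<union> {e ! i} \<in> beta_extension U N P \<kappa> l u \<beta>" if "i < \<beta> * \<kappa>" for i
      using D_F[OF good[of i]] that unfolding F_def Mb_def n_def by simp
  qed
qed

end
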